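(* In the setting of the context, assume $q<q_c$, that $B$ is invertible (so $m=n$), and that $A$ is invertible. Then the stability threshold satisfies $$\bar\delta(q)\ge\lambda_{\min}\{\Xi(A^\top PA)^{-1}\Xi\},$$ where $\Xi=(Q+(1-q)c_2A^\top P_0^2A)^{1/2}$, $c_2=\dfrac{\lambda_{\min}(R)\lambda_{\min}(BB^\top)}{\lambda_{\max}(R+B^\top PB)^2}$, $P$ is the positive definite solution of the modified Riccati equation with parameter $q$ and $P_0$ that with parameter $0$.
   Context: Let $A\in\mathbb{R}^{n\times n}$, $B\in\mathbb{R}^{n\times m}$ with $(A,B)$ stabilizable, and let $Q$, $R$ be symmetric positive definite. Let $q\in(0,1)$ be the loss probability of $x_{t+1}=Ax_t+\lambda_tBu_t$ with i.i.d. $\lambda_t$, $\mathcal P(\lambda_t=0)=q$. For $p\in[0,1)$ the modified Riccati equation with parameter $p$ is $X=Q+A^\top XA-(1-p)A^\top XB(R+B^\top XB)^{-1}B^\top XA$; $q_c$ is the critical loss probability such that for every $p\in[0,q_c)$ this equation has a unique positive definite solution. For $\hat q\in[0,q_c)$ let $\hat P$ be the positive definite solution for parameter $\hat q$ and $\hat K=-(R+B^\top\hat PB)^{-1}B^\top\hat PA$. Define $\mathcal C(q,\hat q)=Q+(1-q)\hat K^\top R\hat K-(q-\hat q)A^\top\hat PB(R+B^\top\hat PB)^{-1}B^\top\hat PA$ and the stability threshold $\bar\delta(q)=\sup\{\delta\ge0:\ \mathcal C(q,\hat q)\succ0 \text{ for all } \hat q\in[0,q_c)\text{ with } q-\hat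 q<\delta\}$ (possibly $+\infty$). *)

theory Defs
  imports "HOL-Analysis.Analysis"
begin

type_synonym 'n sqmat = "real ^ 'n ^ 'n"

definition pos_def :: "'n::finite sqmat \<Rightarrow> bool" where
  "pos_def M \<longleftrightarrow> transpose M = M \<and> (\<forall>x. x \<noteq> 0 \<longrightarrow> 0 < x \<bullet> (M *v x))"

definition pos_semidef :: "'n::finite sqmat \<Rightarrow> bool" where
  "pos_semidef M \<longleftrightarrow> transpose M = M \<and> (\<forall>x. 0 \<le> x \<bullet> (M *v x))"

definition is_eigenvalue :: "'n::finite sqmat \<Rightarrow> real \<Rightarrow> bool" where
  "is_eigenvalue M l \<longleftrightarrow> (\<exists>v. v \<noteq> 0 \<and> M *v v = l *\<^sub>R v)"

definition lambda_min :: "'n::finite sqmat \<Rightarrow> real" where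
  "lambda_min M = Min {l. is_eigenvalue M l}"

definition lambda_max :: "'n::finite sqmat \<Rightarrow> real" where
  "lambda_max M = Max {l. is_eigenvalue M l}"

definition msqrt :: "'n::finite sqmat \<Rightarrow> 'n sqmat" where
  "msqrt M = (THE S. pos_semidef S \<and> S ** S = M)"

fun mpow :: "'n::finite sqmat \<Rightarrow> nat \<Rightarrow> 'n sqmat" where
  "mpow M 0 = mat 1"
| "mpow M (Suc k) = M ** mpow M k"

definition stabilizable :: "('n::finite sqmat) \<Rightarrow> real ^ 'm::finite ^ 'n \<Rightarrow> bool" where
  "stabilizable A B \<longleftrightarrow> (\<exists>K :: real ^ 'n ^ 'm. (\<lambda>k. mpow (A + B ** K) k) \<longlonglongrightarrow> 0)"

definition mare :: "'n::finite sqmat \<Rightarrow> real ^ 'm::finite ^ 'n \<Rightarrow> 'n sqmat \<Rightarrow> real ^ 'm ^ 'm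
    \<Rightarrow> real \<Rightarrow> 'n sqmat \<Rightarrow> bool" where
  "mare A B Q R p X \<longleftrightarrow>
     X = Q + transpose A ** X ** A
         - (1 - p) *\<^sub>R (transpose A ** X ** B ** matrix_inv (R + transpose B ** X ** B)
                         ** transpose B ** X ** A)"

definition q_crit :: "'n::finite sqmat \<Rightarrow> real ^ 'm::finite ^ 'n \<Rightarrow> 'n sqmat \<Rightarrow> real ^ 'm ^ 'm \<Rightarrow> real" where
  "q_crit A B Q R = Sup {c. 0 \<le> c \<and> c \<le> 1 \<and>
      (\<forall>p. 0 \<le> p \<and> p < c \<longrightarrow> (\<exists>!X. pos_def X \<and> mare A B Q R p X))}"

definition Psol :: "'n::finite sqmat \<Rightarrow> real ^ 'm::finite ^ 'n \<Rightarrow> 'n sqmat \<Rightarrow> real ^ 'm ^ 'm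
    \<Rightarrow> real \<Rightarrow> 'n sqmat" where
  "Psol A B Q R p = (THE X. pos_def X \<and> mare A B Q R p X)"

definition Kgain :: "'n::finite sqmat \<Rightarrow> real ^ 'm::finite ^ 'n \<Rightarrow> 'n sqmat \<Rightarrow> real ^ 'm ^ 'm
    \<Rightarrow> real \<Rightarrow> real ^ 'n ^ 'm" where
  "Kgain A B Q R p = (let P = Psol A B Q R p in
      - (matrix_inv (R + transpose B ** P ** B) ** transpose B ** P ** A))"

definition Cmat :: "'n::finite sqmat \<Rightarrow> real ^ 'm::finite ^ 'n \<Rightarrow> 'n sqmat \<Rightarrow> real ^ 'm ^ 'm
    \<Rightarrow> real \<Rightarrow> real \<Rightarrow> 'n sqmat" where
  "Cmat A B Q R q qh = (let P = Psol A B Q R qh; K = Kgain A B Q R qh in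
      Q + (1 - q) *\<^sub>R (transpose K ** R ** K)
        - (q - qh) *\<^sub>R (transpose A ** P ** B ** matrix_inv (R + transpose B ** P ** B)
                          ** transpose B ** P ** A))"

definition delta_bar :: "'n::finite sqmat \<Rightarrow> real ^ 'm::finite ^ 'n \<Rightarrow> 'n sqmat \<Rightarrow> real ^ 'm ^ 'm
    \<Rightarrow> real \<Rightarrow> ereal" where
  "delta_bar A B Q R q = Sup {ereal d | d. 0 \<le> d \<and>
      (\<forall>qh. 0 \<le> qh \<and> qh < q_crit A B Q R \<and> q - qh < d \<longrightarrow> pos_def (Cmat A B Q R q qh))}"

end

theory Submission
  imports Defs
begin


definition qf :: "real^'n::finite^'n \<Rightarrow> real^'n \<Rightarrow> real" where
  "qf M x = x \<bullet> (M *v x)"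

lemma dot_transp: "(x::real^'n::finite) \<bullet> (transpose A *v y) = (A *v x) \<bullet> y"
  by (metis dot_lmul_matrix inner_commute vector_transpose_matrix transpose_matrix_vector)

lemma dot_transp2: "(transpose A *v x) \<bullet> (y::real^'n::finite) = x \<bullet> (A *v y)"
  using dot_transp[of y A x] by (simp add: inner_commute)

lemma sym_dot: assumes "transpose M = M" shows "(x::real^'n::finite) \<bullet> (M *v y) = (M *v x) \<bullet> y"
  using dot_transp[of x M y] assms by simp

lemma transpose_add: "transpose (A + B) = transpose A + transpose (B::real^'n::finite^'m::finite)"
  by (simp add: transpose_def vec_eq_iff)
lemma transpose_diff: "transpose (A - B) = transpose A - transpose (B::real^'n::finite^'m::finite)"
  by (simp add: transpose_def vec_eq_iff)

lemma qf_add: "qf (M + N) x = qf M x + qf N x"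
  by (simp add: qf_def matrix_vector_mult_add_rdistrib inner_add_right)
lemma qf_diff: "qf (M - N) x = qf M x - qf N x"
  by (simp add: qf_def matrix_vector_mult_diff_rdistrib inner_diff_right)
lemma qf_scale: "qf (c *\<^sub>R M) x = c * qf M x"
  by (simp add: qf_def scaleR_matrix_vector_assoc[symmetric])
lemma dot_vmul: "(x::real^'n::finite) \<bullet> (y v* A) = (A *v x) \<bullet> y"
  by (metis dot_transp transpose_matrix_vector)
lemma dot_vmul2: "(y v* A) \<bullet> (x::real^'n::finite) = y \<bullet> (A *v x)"
  by (metis dot_lmul_matrix)

lemma qf_congr: "qf (transpose A ** M ** A) x = qf M (A *v x)"
  by (simp add: qf_def matrix_vector_mul_assoc[symmetric] dot_vmul)

lemma qf_expand: assumes "transpose M = M"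
  shows "qf M (u + v) = qf M u + 2 * (u \<bullet> (M *v v)) + qf M v"
  using sym_dot[OF assms, of v u]
  by (simp add: qf_def matrix_vector_right_distrib inner_add_left inner_add_right inner_commute)

lemma qf_scaleR_vec: "qf M (c *\<^sub>R x) = c^2 * qf M x"
  by (simp add: qf_def matrix_vector_mult_scaleR power2_eq_square)

lemma inv_props: assumes "invertible M"
  shows "M ** matrix_inv M = mat 1" "matrix_inv M ** M = mat 1"
  using someI_ex[OF assms[unfolded invertible_def]] unfolding matrix_inv_def by auto

lemma inv_vec: assumes "invertible M"
  shows "M *v (matrix_inv M *v x) = x" "matrix_inv M *v (M *v x) = x"
  by (simp_all add: matrix_vector_mul_assoc inv_props[OF assms])

lemma inv_unique: assumes "(M::real^'n::finite^'n) ** N = mat 1" shows "matrix_inv M = N"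
proof -
  have inv: "invertible M" using assms invertible_right_inverse by blast
  have "matrix_inv M = matrix_inv M ** (M ** N)" using assms by simp
  also have "\<dots> = N" by (simp add: matrix_mul_assoc inv_props[OF inv])
  finally show ?thesis .
qed

lemma inv_sym: assumes "invertible (M::real^'n::finite^'n)" "transpose M = M"
  shows "transpose (matrix_inv M) = matrix_inv M"
proof -
  have "transpose (matrix_inv M ** M) = mat 1" using inv_props[OF assms(1)] by simp
  hence "M ** transpose (matrix_inv M) = mat 1" using assms(2) by (simp add: matrix_transpose_mul)
  thus ?thesis using inv_unique by metis
qed

lemma pd_invertible: assumes "\<forall>x. x \<noteq> 0 \<longrightarrow> 0 < qf (M::real^'n::finite^'n) x"
  shows "invertible M"
proof -
  have "\<forall>x. M *v x = 0 \<longrightarrow> x = 0" using assms by (auto simp: qf_def)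
  hence "\<exists>B. B ** M = mat 1" using matrix_left_invertible_ker by blast
  thus ?thesis using invertible_left_inverse by blast
qed

lemma discr: fixes a b c :: real
  assumes "\<forall>t. 0 \<le> a + 2*b*t + c*t^2" "0 \<le> c"
  shows "b^2 \<le> a*c"
proof (cases "c = 0")
  case True
  have "b = 0"
  proof (rule ccontr)
    assume "b \<noteq> 0"
    have "0 \<le> a + 2*b*(-(a+1)/(2*b))" using assms(1)[rule_format, of "-(a+1)/(2*b)"] True by simp
    thus False using \<open>b \<noteq> 0\<close> by (simp add: field_simps)
  qed
  thus ?thesis using True by simp
next
  case False
  hence "c > 0" using assms(2) by simp
  have "0 \<le> a + 2*b*(-b/c) + c*(-b/c)^2" using assms(1) by blast
  hence "0 \<le> a - b^2/c" using \<open>c>0\<close> by (simp add: power2_eq_square field_simps)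
  thus ?thesis using \<open>c>0\<close> by (simp add: field_simps)
qed



lemma lin_quad: fixes b c :: real
  assumes "\<forall>t. 0 \<le> b*t + c*t^2" shows "b = 0"
proof (rule ccontr)
  assume "b \<noteq> 0"
  define e where "e = \<bar>c\<bar> + 1"
  have e: "e > 0" "\<bar>c\<bar> < e" unfolding e_def by auto
  have "0 \<le> b*(-b/e) + c*(-b/e)^2" using assms by blast
  also have "c*(-b/e)^2 \<le> \<bar>c\<bar>*(b/e)^2"
  proof -
    have "(-b/e)^2 = (b/e)^2" by (simp add: power2_eq_square)
    thus ?thesis by (simp add: mult_right_mono)
  qed
  finally have "0 \<le> -(b^2)/e + \<bar>c\<bar>*(b^2/e^2)" by (simp add: power2_eq_square power_divide)
  hence "0 \<le> (-(b^2)*e + \<bar>c\<bar>*b^2)/e^2" using e by (simp add: field_simps power2_eq_square)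
  hence "0 \<le> -(b^2)*e + \<bar>c\<bar>*b^2" using e by (simp add: zero_le_divide_iff)
  hence "0 \<le> b^2 * (\<bar>c\<bar> - e)" by (simp add: algebra_simps)
  moreover have "b^2 > 0" using \<open>b \<noteq> 0\<close> by simp
  ultimately show False using e by (simp add: zero_le_mult_iff)
qed

lemma eig_in_subspace:
  fixes M :: "real^'n::finite^'n"
  assumes sym: "transpose M = M" and sub: "subspace W" and inv: "\<forall>x\<in>W. M *v x \<in> W"
    and ne: "w \<in> W" "w \<noteq> 0"
  shows "\<exists>v\<in>W. norm v = 1 \<and> M *v v = qf M v *\<^sub>R v \<and> (\<forall>x\<in>W. qf M v * (x \<bullet> x) \<le> qf M x)"
proof -
  let ?K = "sphere 0 1 \<inter> W"
  have cK: "compact ?K" using closed_subspace[OF sub] by (intro compact_Int_closed) auto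
  have "w /\<^sub>R norm w \<in> ?K" using ne sub by (auto simp: subspace_scale)
  hence neK: "?K \<noteq> {}" by blast
  have cont: "continuous_on ?K (qf M)" unfolding qf_def by (intro continuous_intros)
  obtain v where v: "v \<in> ?K" "\<forall>y\<in>?K. qf M v \<le> qf M y"
    using continuous_attains_inf[OF cK neK cont] by blast
  define \<mu> where "\<mu> = qf M v"
  have nv: "norm v = 1" "v \<in> W" using v by auto
  have vv: "v \<bullet> v = 1" using nv by (simp add: dot_square_norm)
  have ray: "\<forall>x\<in>W. \<mu> * (x \<bullet> x) \<le> qf M x"
  proof
    fix x assume xW: "x \<in> W"
    show "\<mu> * (x \<bullet> x) \<le> qf M x"
    proof (cases "x = 0")
      case True thus ?thesis by (simp add: qf_def)
    next
      case False
      have "x /\<^sub>R norm x \<in> ?K" using xW False sub by (auto simp: subspace_scale)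
      hence "\<mu> \<le> qf M (x /\<^sub>R norm x)" using v(2) \<mu>_def by blast
      also have "\<dots> = qf M x / (norm x)^2" by (simp add: qf_scaleR_vec power_divide divide_inverse power_inverse)
      finally have "\<mu> * (norm x)^2 \<le> qf M x" using False by (simp add: field_simps)
      thus ?thesis by (simp add: dot_square_norm)
    qed
  qed
  define u where "u = M *v v - \<mu> *\<^sub>R v"
  have uW: "u \<in> W" unfolding u_def using inv nv sub by (simp add: subspace_diff subspace_scale)
  have vu: "v \<bullet> u = 0" unfolding u_def \<mu>_def qf_def using vv by (simp add: inner_diff_right)
  have Mvu: "v \<bullet> (M *v u) = u \<bullet> u"
  proof -
    have "v \<bullet> (M *v u) = (M *v v) \<bullet> u" using sym_dot[OF sym] by blast
    also have "M *v v = u + \<mu> *\<^sub>R v" unfolding u_def by simp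
    finally show ?thesis using vu by (simp add: inner_add_right inner_commute)
  qed
  have "\<forall>t. 0 \<le> (2 * (u \<bullet> u)) * t + (qf M u - \<mu> * (u \<bullet> u)) * t^2"
  proof
    fix t :: real
    have yW: "v + t *\<^sub>R u \<in> W" using uW nv sub by (simp add: subspace_add subspace_scale)
    have e0: "\<mu> * ((v + t *\<^sub>R u) \<bullet> (v + t *\<^sub>R u)) \<le> qf M (v + t *\<^sub>R u)" using ray yW by blast
    have e1: "qf M (v + t *\<^sub>R u) = \<mu> + 2 * t * (u \<bullet> u) + t^2 * qf M u"
      using qf_expand[OF sym, of v "t *\<^sub>R u"] Mvu \<mu>_def
      by (simp add: qf_scaleR_vec matrix_vector_mult_scaleR)
    have e2: "(v + t *\<^sub>R u) \<bullet> (v + t *\<^sub>R u) = 1 + t^2 * (u \<bullet> u)"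
      using vv vu by (simp add: inner_add_left inner_add_right inner_commute power2_eq_square)
    from e0 have "\<mu> * (1 + t^2 * (u \<bullet> u)) \<le> \<mu> + 2 * t * (u \<bullet> u) + t^2 * qf M u"
      by (simp only: e1 e2)
    thus "0 \<le> (2 * (u \<bullet> u)) * t + (qf M u - \<mu> * (u \<bullet> u)) * t^2"
      by (simp add: algebra_simps)
  qed
  hence "2 * (u \<bullet> u) = 0" by (rule lin_quad)
  hence "u = 0" by simp
  hence "M *v v = \<mu> *\<^sub>R v" unfolding u_def by simp
  thus ?thesis using nv ray \<mu>_def by blast
qed

lemma rayleigh_min:
  fixes M :: "real^'n::finite^'n"
  assumes sym: "transpose M = M"
  shows "\<exists>v. norm v = 1 \<and> M *v v = qf M v *\<^sub>R v \<and> (\<forall>x. qf M v * (x \<bullet> x) \<le> qf M x)"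
proof -
  obtain i :: 'n where True by blast
  have "(axis i 1 :: real^'n) \<noteq> 0" by simp
  from eig_in_subspace[OF sym subspace_UNIV _ UNIV_I this] show ?thesis by auto
qed

lemma eig_finite:
  fixes M :: "real^'n::finite^'n"
  assumes sym: "transpose M = M"
  shows "finite {l. is_eigenvalue M l}"
proof -
  let ?E = "{l. is_eigenvalue M l}"
  define f where "f l = (SOME v. v \<noteq> 0 \<and> M *v v = l *\<^sub>R v)" for l
  have fE: "f l \<noteq> 0 \<and> M *v f l = l *\<^sub>R f l" if "l \<in> ?E" for l
    using that unfolding f_def is_eigenvalue_def by (metis (mono_tags, lifting) mem_Collect_eq someI_ex)
  have inj: "inj_on f ?E"
  proof (rule inj_onI)
    fix l1 l2 assume "l1 \<in> ?E" "l2 \<in> ?E" "f l1 = f l2"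
    hence "l1 *\<^sub>R f l1 = l2 *\<^sub>R f l1" "f l1 \<noteq> 0" using fE by metis+
    thus "l1 = l2" by (metis scaleR_cancel_right)
  qed
  have "pairwise orthogonal (f ` ?E)"
  proof (auto simp: pairwise_def orthogonal_def)
    fix l1 l2 assume a: "is_eigenvalue M l1" "is_eigenvalue M l2" "f l1 \<noteq> f l2"
    hence ne: "l1 \<noteq> l2" by blast
    have e1: "M *v f l1 = l1 *\<^sub>R f l1" and e2: "M *v f l2 = l2 *\<^sub>R f l2" using fE a by auto
    have "l2 * (f l1 \<bullet> f l2) = f l1 \<bullet> (M *v f l2)" using e2 by simp
    also have "\<dots> = (M *v f l1) \<bullet> f l2" using sym_dot[OF sym] by blast
    also have "\<dots> = l1 * (f l1 \<bullet> f l2)" using e1 by simp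
    finally show "f l1 \<bullet> f l2 = 0" using ne by simp
  qed
  moreover have "0 \<notin> f ` ?E" using fE by auto
  ultimately have "independent (f ` ?E)" by (rule pairwise_orthogonal_independent)
  hence "finite (f ` ?E)" using independent_bound by blast
  thus ?thesis using inj finite_imageD by blast
qed

lemma lmin:
  fixes M :: "real^'n::finite^'n"
  assumes sym: "transpose M = M"
  shows "\<forall>x. lambda_min M * (x \<bullet> x) \<le> qf M x"
    "\<exists>v. norm v = 1 \<and> qf M v = lambda_min M \<and> M *v v = lambda_min M *\<^sub>R v"
proof -
  obtain v where v: "norm v = 1" "M *v v = qf M v *\<^sub>R v" "\<forall>x. qf M v * (x \<bullet> x) \<le> qf M x"
    using rayleigh_min[OF sym] by blast
  have "lambda_min M = qf M v" unfolding lambda_min_def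
  proof (rule Min_eqI[OF eig_finite[OF sym]])
    show "qf M v \<in> {l. is_eigenvalue M l}" using v unfolding is_eigenvalue_def by (auto intro!: exI[of _ v])
  next
    fix y assume "y \<in> {l. is_eigenvalue M l}"
    then obtain w where w: "w \<noteq> 0" "M *v w = y *\<^sub>R w" unfolding is_eigenvalue_def by auto
    have "qf M w = y * (w \<bullet> w)" using w by (simp add: qf_def)
    hence "qf M v * (w \<bullet> w) \<le> y * (w \<bullet> w)" using v(3) by metis
    thus "qf M v \<le> y" using w(1) by simp
  qed
  thus "\<forall>x. lambda_min M * (x \<bullet> x) \<le> qf M x" "\<exists>v. norm v = 1 \<and> qf M v = lambda_min M \<and> M *v v = lambda_min M *\<^sub>R v"
    using v by auto
qed

lemma transpose_uminus: "transpose (- A) = - transpose (A::real^'n::finite^'m::finite)"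
  by (simp add: transpose_def vec_eq_iff)

lemma neg_mv: "(- A) *v x = - (A *v (x::real^'n::finite))"
  by (simp add: matrix_vector_mult_def vec_eq_iff sum_negf)

lemma lmax:
  fixes M :: "real^'n::finite^'n"
  assumes sym: "transpose M = M"
  shows "\<forall>x. qf M x \<le> lambda_max M * (x \<bullet> x)"
    "\<exists>v. norm v = 1 \<and> qf M v = lambda_max M \<and> M *v v = lambda_max M *\<^sub>R v"
proof -
  have sym': "transpose (-M) = -M" using sym by (simp add: transpose_uminus)
  obtain v where v: "norm v = 1" "(-M) *v v = qf (-M) v *\<^sub>R v" "\<forall>x. qf (-M) v * (x \<bullet> x) \<le> qf (-M) x"
    using rayleigh_min[OF sym'] by blast
  have qn: "qf (-M) x = - qf M x" for x by (simp add: qf_def neg_mv)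
  have Mv: "M *v v = qf M v *\<^sub>R v" using v(2) qn by (metis neg_mv neg_equal_iff_equal scaleR_minus_left)
  have ray: "\<forall>x. qf M x \<le> qf M v * (x \<bullet> x)" using v(3) qn by simp
  have "lambda_max M = qf M v" unfolding lambda_max_def
  proof (rule Max_eqI[OF eig_finite[OF sym]])
    show "qf M v \<in> {l. is_eigenvalue M l}" using v Mv unfolding is_eigenvalue_def by (auto intro!: exI[of _ v])
  next
    fix y assume "y \<in> {l. is_eigenvalue M l}"
    then obtain w where w: "w \<noteq> 0" "M *v w = y *\<^sub>R w" unfolding is_eigenvalue_def by auto
    have "qf M w = y * (w \<bullet> w)" using w by (simp add: qf_def)
    hence "y * (w \<bullet> w) \<le> qf M v * (w \<bullet> w)" using ray by metis
    thus "y \<le> qf M v" using w(1) by simp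
  qed
  thus "\<forall>x. qf M x \<le> lambda_max M * (x \<bullet> x)" "\<exists>v. norm v = 1 \<and> qf M v = lambda_max M \<and> M *v v = lambda_max M *\<^sub>R v"
    using v Mv ray by auto
qed



definition good_eig :: "real^'n::finite^'n \<Rightarrow> (real^'n) set \<Rightarrow> bool" where
  "good_eig M E \<longleftrightarrow> finite E \<and> (\<forall>e\<in>E. norm e = 1 \<and> M *v e = qf M e *\<^sub>R e)
     \<and> (\<forall>e\<in>E. \<forall>e'\<in>E. e \<noteq> e' \<longrightarrow> e \<bullet> e' = 0)"

lemma good_eig_card:
  fixes M :: "real^'n::finite^'n"
  assumes "good_eig M E" shows "card E \<le> CARD('n::finite)"
proof -
  have "pairwise orthogonal E" using assms unfolding good_eig_def pairwise_def orthogonal_def by blast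
  moreover have "0 \<notin> E" using assms unfolding good_eig_def by force
  ultimately have "independent E" by (rule pairwise_orthogonal_independent)
  hence "card E \<le> DIM(real^'n)" using independent_bound by blast
  thus ?thesis by simp
qed

lemma good_eig_extend:
  fixes M :: "real^'n::finite^'n"
  assumes sym: "transpose M = M" and g: "good_eig M E" and z: "z \<noteq> 0" "\<forall>e\<in>E. e \<bullet> z = 0"
  shows "\<exists>E'. good_eig M E' \<and> card E' = Suc (card E)"
proof -
  define W where "W = {x. \<forall>e\<in>E. e \<bullet> x = 0}"
  have sub: "subspace W" unfolding W_def subspace_def by (auto simp: inner_add_right)
  have inv: "\<forall>x\<in>W. M *v x \<in> W"
  proof
    fix x assume "x \<in> W"
    show "M *v x \<in> W" unfolding W_def mem_Collect_eq
    proof (intro ballI)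
      fix e assume eE: "e \<in> E"
      have "e \<bullet> (M *v x) = (M *v e) \<bullet> x" using sym_dot[OF sym] by blast
      also have "\<dots> = qf M e * (e \<bullet> x)" using g eE unfolding good_eig_def by auto
      also have "\<dots> = 0" using \<open>x \<in> W\<close> eE unfolding W_def by auto
      finally show "e \<bullet> (M *v x) = 0" .
    qed
  qed
  have "z \<in> W" using z unfolding W_def by auto
  then obtain v where v: "v \<in> W" "norm v = 1" "M *v v = qf M v *\<^sub>R v"
    using eig_in_subspace[OF sym sub inv _ z(1)] by blast
  have vE: "v \<notin> E"
  proof
    assume "v \<in> E"
    hence "v \<bullet> v = 0" using v(1) unfolding W_def by auto
    thus False using v(2) by simp
  qed
  have "good_eig M (insert v E)"
    using g v vE unfolding good_eig_def W_def by (auto simp: inner_commute)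
  moreover have "card (insert v E) = Suc (card E)" using vE g unfolding good_eig_def by simp
  ultimately show ?thesis by blast
qed

lemma orth_eigbasis:
  fixes M :: "real^'n::finite^'n"
  assumes sym: "transpose M = M"
  shows "\<exists>E. good_eig M E \<and> (\<forall>z. (\<forall>e\<in>E. e \<bullet> z = 0) \<longrightarrow> z = 0)"
proof (rule ccontr)
  assume na: "\<not> ?thesis"
  have "\<exists>E. good_eig M E \<and> card E = k" for k
  proof (induction k)
    case 0
    have "good_eig M {}" unfolding good_eig_def by simp
    thus ?case by force
  next
    case (Suc k)
    then obtain E where E: "good_eig M E" "card E = k" by blast
    then obtain z where "z \<noteq> 0" "\<forall>e\<in>E. e \<bullet> z = 0" using na by blast
    from good_eig_extend[OF sym E(1) this] show ?case using E(2) by blast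
  qed
  then obtain E where "good_eig M E" "card E = Suc CARD('n)" by blast
  thus False using good_eig_card[of M E] by simp
qed

lemma expand:
  assumes g: "good_eig M E" and c: "\<forall>z. (\<forall>e\<in>E. e \<bullet> z = 0) \<longrightarrow> z = 0"
  shows "x = (\<Sum>e\<in>E. (e \<bullet> x) *\<^sub>R e)"
proof -
  have fin: "finite E" using g unfolding good_eig_def by blast
  have ortho: "e' \<bullet> (\<Sum>e\<in>E. f e *\<^sub>R e) = f e'" if "e' \<in> E" for e' f
  proof -
    have "e' \<bullet> (\<Sum>e\<in>E. f e *\<^sub>R e) = (\<Sum>e\<in>E. f e * (e' \<bullet> e))" by (simp add: inner_sum_right)
    also have "\<dots> = (\<Sum>e\<in>E. if e = e' then f e else 0)"
    proof (rule sum.cong)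
      fix e assume "e \<in> E"
      show "f e * (e' \<bullet> e) = (if e = e' then f e else 0)"
        using g \<open>e \<in> E\<close> that unfolding good_eig_def by (auto simp: dot_square_norm)
    qed simp
    also have "\<dots> = f e'" using fin that by (simp add: sum.delta')
    finally show ?thesis .
  qed
  have "\<forall>e'\<in>E. e' \<bullet> (x - (\<Sum>e\<in>E. (e \<bullet> x) *\<^sub>R e)) = 0"
    using ortho[of _ "\<lambda>e. e \<bullet> x"] by (simp add: inner_diff_right)
  hence "x - (\<Sum>e\<in>E. (e \<bullet> x) *\<^sub>R e) = 0" using c by blast
  thus ?thesis by simp
qed

lemma ortho_sum:
  assumes g: "good_eig M E" and "e' \<in> E"
  shows "e' \<bullet> (\<Sum>e\<in>E. f e *\<^sub>R e) = f e'"
proof -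
  have fin: "finite E" using g unfolding good_eig_def by blast
  have "e' \<bullet> (\<Sum>e\<in>E. f e *\<^sub>R e) = (\<Sum>e\<in>E. f e * (e' \<bullet> e))" by (simp add: inner_sum_right)
  also have "\<dots> = (\<Sum>e\<in>E. if e = e' then f e else 0)"
  proof (rule sum.cong)
    fix e assume "e \<in> E"
    show "f e * (e' \<bullet> e) = (if e = e' then f e else 0)"
      using g \<open>e \<in> E\<close> assms(2) unfolding good_eig_def by (auto simp: dot_square_norm)
  qed simp
  also have "\<dots> = f e'" using fin assms(2) by (simp add: sum.delta')
  finally show ?thesis .
qed

lemma sym_from_dot:
  fixes S :: "real^'n::finite^'n"
  assumes "\<forall>x y. x \<bullet> (S *v y) = (S *v x) \<bullet> y"
  shows "transpose S = S"
proof -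
  have "transpose S *v y = S *v y" for y
  proof -
    define d where "d = transpose S *v y - S *v y"
    have "d \<bullet> d = d \<bullet> (transpose S *v y) - d \<bullet> (S *v y)" unfolding d_def by (simp add: inner_diff_right)
    also have "d \<bullet> (transpose S *v y) = (S *v d) \<bullet> y" by (simp add: dot_vmul)
    also have "(S *v d) \<bullet> y = d \<bullet> (S *v y)" using assms by simp
    finally have "d \<bullet> d = 0" by simp
    thus ?thesis unfolding d_def by simp
  qed
  thus ?thesis by (simp add: matrix_eq)
qed

lemma psd_eig_nonneg:
  assumes "pos_semidef M" "good_eig M E" "e \<in> E" shows "0 \<le> qf M e"
  using assms unfolding pos_semidef_def qf_def by auto

lemma msqrt_unique_ex:
  fixes M :: "real^'n::finite^'n"
  assumes psd: "pos_semidef M"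
  shows "\<exists>!S. pos_semidef S \<and> S ** S = M"
proof -
  have sym: "transpose M = M" using psd unfolding pos_semidef_def by blast
  obtain E where g: "good_eig M E" and c: "\<forall>z. (\<forall>e\<in>E. e \<bullet> z = 0) \<longrightarrow> z = 0"
    using orth_eigbasis[OF sym] by blast
  have fin: "finite E" using g unfolding good_eig_def by blast
  have eig: "\<And>e. e \<in> E \<Longrightarrow> M *v e = qf M e *\<^sub>R e" using g unfolding good_eig_def by blast
  have lnn: "\<And>e. e \<in> E \<Longrightarrow> 0 \<le> qf M e" using psd_eig_nonneg[OF psd g] by blast
  define c where "c e = sqrt (qf M e)" for e
  define f where "f x = (\<Sum>e\<in>E. (c e * (e \<bullet> x)) *\<^sub>R e)" for x
  have lin1: "linear (\<lambda>x. (c e * (e \<bullet> x)) *\<^sub>R e)" for e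
    by (intro linearI) (simp_all add: inner_add_right distrib_left scaleR_add_left)
  have lin: "linear f" unfolding f_def
    by (rule linear_compose_sum) (simp add: lin1)
  define S where "S = matrix f"
  have Sv: "S *v x = f x" for x unfolding S_def using matrix_vector_mul(2)[OF lin] by metis
  have ef: "e \<in> E \<Longrightarrow> e \<bullet> f x = c e * (e \<bullet> x)" for e x unfolding f_def using ortho_sum[OF g, of e "\<lambda>e. c e * (e \<bullet> x)"] by simp
  have Ssym: "transpose S = S"
  proof (rule sym_from_dot, intro allI)
    fix x y
    have "x \<bullet> (S *v y) = (\<Sum>e\<in>E. c e * (e \<bullet> y) * (x \<bullet> e))" by (simp add: Sv f_def inner_sum_right)
    also have "\<dots> = (\<Sum>e\<in>E. c e * (e \<bullet> x) * (e \<bullet> y))" by (simp add: inner_commute mult.commute mult.left_commute)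
    also have "\<dots> = (S *v x) \<bullet> y" by (simp add: Sv f_def inner_sum_left)
    finally show "x \<bullet> (S *v y) = (S *v x) \<bullet> y" .
  qed
  have Spsd: "pos_semidef S" unfolding pos_semidef_def
  proof (intro conjI allI Ssym)
    fix x
    have "x \<bullet> (S *v x) = (\<Sum>e\<in>E. c e * (e \<bullet> x) * (x \<bullet> e))" by (simp add: Sv f_def inner_sum_right)
    also have "\<dots> = (\<Sum>e\<in>E. c e * (e \<bullet> x)^2)" by (simp add: inner_commute power2_eq_square mult.assoc)
    also have "\<dots> \<ge> 0" by (intro sum_nonneg) (simp add: c_def lnn)
    finally show "0 \<le> x \<bullet> (S *v x)" .
  qed
  have Mexp: "M *v x = (\<Sum>e\<in>E. (qf M e * (e \<bullet> x)) *\<^sub>R e)" for x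
  proof -
    have ex: "(\<Sum>e\<in>E. (e \<bullet> x) *\<^sub>R e) = x" by (rule expand[OF g c, symmetric])
    have "M *v x = M *v (\<Sum>e\<in>E. (e \<bullet> x) *\<^sub>R e)" by (simp only: ex)
    also have "\<dots> = (\<Sum>e\<in>E. (e \<bullet> x) *\<^sub>R (M *v e))"
      by (simp add: linear_sum[OF matrix_vector_mul_linear] matrix_vector_mult_scaleR o_def)
    also have "\<dots> = (\<Sum>e\<in>E. (qf M e * (e \<bullet> x)) *\<^sub>R e)"
      by (rule sum.cong) (simp_all add: eig)
    finally show ?thesis .
  qed
  have SS: "S ** S = M"
  proof -
    have "(S ** S) *v x = M *v x" for x
    proof -
      have "(S ** S) *v x = f (f x)" by (simp add: matrix_vector_mul_assoc[symmetric] Sv)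
      also have "\<dots> = (\<Sum>e\<in>E. (c e * (c e * (e \<bullet> x))) *\<^sub>R e)"
        unfolding f_def[of "f x"] by (rule sum.cong) (simp_all add: ef)
      also have "\<dots> = (\<Sum>e\<in>E. (qf M e * (e \<bullet> x)) *\<^sub>R e)"
        by (rule sum.cong) (simp_all add: c_def lnn mult.assoc[symmetric])
      finally show ?thesis using Mexp by simp
    qed
    thus ?thesis by (simp add: matrix_eq)
  qed
  have uniq: "T = S" if T: "pos_semidef T" "T ** T = M" for T
  proof -
    have Tsym: "transpose T = T" using T unfolding pos_semidef_def by blast
    have Te: "T *v e = c e *\<^sub>R e" if eE: "e \<in> E" for e
    proof -
      define s where "s = c e"
      have s2: "s * s = qf M e" unfolding s_def c_def using lnn[OF eE] by simp
      have s0: "s \<ge> 0" unfolding s_def c_def using lnn[OF eE] by simp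
      have TT: "T *v (T *v e) = qf M e *\<^sub>R e" using T(2) eig[OF eE] by (simp add: matrix_vector_mul_assoc)
      show ?thesis
      proof (cases "s = 0")
        case True
        hence "T *v (T *v e) = 0" using TT s2 by simp
        hence "(T *v e) \<bullet> (T *v e) = 0" using sym_dot[OF Tsym, of e "T *v e"] by simp
        thus ?thesis using True s_def by simp
      next
        case False
        hence sp: "s > 0" using s0 by simp
        define w where "w = T *v e - s *\<^sub>R e"
        have "T *v w + s *\<^sub>R w = 0"
          unfolding w_def using TT s2
          by (simp add: matrix_vector_mult_diff_distrib matrix_vector_mult_scaleR algebra_simps)
        hence "w \<bullet> (T *v w) + s * (w \<bullet> w) = 0"
          by (metis inner_add_right inner_scaleR_right inner_zero_right)
        moreover have "w \<bullet> (T *v w) \<ge> 0" using T(1) unfolding pos_semidef_def by blast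
        ultimately have "s * (w \<bullet> w) \<le> 0" by linarith
        hence "w \<bullet> w \<le> 0" using sp by (simp add: mult_le_0_iff)
        hence "w = 0" by (metis inner_gt_zero_iff not_le)
        thus ?thesis unfolding w_def s_def by simp
      qed
    qed
    have "T *v x = S *v x" for x
    proof -
      have ex: "(\<Sum>e\<in>E. (e \<bullet> x) *\<^sub>R e) = x" by (rule expand[OF g c, symmetric])
      have "T *v x = T *v (\<Sum>e\<in>E. (e \<bullet> x) *\<^sub>R e)" by (simp only: ex)
      also have "\<dots> = (\<Sum>e\<in>E. (e \<bullet> x) *\<^sub>R (T *v e))"
        by (simp add: linear_sum[OF matrix_vector_mul_linear] matrix_vector_mult_scaleR o_def)
      also have "\<dots> = f x" unfolding f_def by (rule sum.cong) (simp_all add: Te mult.commute)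
      finally show ?thesis using Sv by simp
    qed
    thus ?thesis by (simp add: matrix_eq)
  qed
  show ?thesis
  proof (rule ex1I[of _ S])
    show "pos_semidef S \<and> S ** S = M" using Spsd SS by blast
  next
    fix T assume "pos_semidef T \<and> T ** T = M"
    thus "T = S" using uniq by blast
  qed
qed

lemma msqrt_props:
  fixes M :: "real^'n::finite^'n"
  assumes "pos_semidef M"
  shows "pos_semidef (msqrt M)" "msqrt M ** msqrt M = M"
  using theI'[OF msqrt_unique_ex[OF assms]] unfolding msqrt_def by auto



definition gm :: "real^'n::finite^'n \<Rightarrow> real^'n^'n \<Rightarrow> real^'n^'n \<Rightarrow> real^'n^'n \<Rightarrow> real \<Rightarrow> real^'n^'n \<Rightarrow> real^'n^'n" where
  "gm A B Q R p X = Q + transpose A ** X ** A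
         - (1 - p) *\<^sub>R (transpose A ** X ** B ** matrix_inv (R + transpose B ** X ** B)
                         ** transpose B ** X ** A)"

lemma mare_gm: "mare A B Q R p X \<longleftrightarrow> X = gm A B Q R p X"
  unfolding mare_def gm_def by simp

lemma qf_chain:
  fixes A B X Si :: "real^'n::finite^'n"
  assumes sym: "transpose X = X"
  shows "qf (transpose A ** X ** B ** Si ** transpose B ** X ** A) x
       = (transpose B *v (X *v (A *v x))) \<bullet> (Si *v (transpose B *v (X *v (A *v x))))"
proof -
  define w where "w = transpose B *v (X *v (A *v x))"
  have "qf (transpose A ** X ** B ** Si ** transpose B ** X ** A) x
      = x \<bullet> (transpose A *v (X *v (B *v (Si *v w))))"
    unfolding qf_def w_def by (simp only: matrix_vector_mul_assoc matrix_mul_assoc)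
  also have "\<dots> = (A *v x) \<bullet> (X *v (B *v (Si *v w)))" by (rule dot_transp)
  also have "\<dots> = (X *v (A *v x)) \<bullet> (B *v (Si *v w))" by (rule sym_dot[OF sym])
  also have "\<dots> = w \<bullet> (Si *v w)" unfolding w_def by (rule dot_transp2[symmetric])
  finally show ?thesis unfolding w_def .
qed

lemma sym_S: assumes "transpose R = R" "transpose X = X"
  shows "transpose (R + transpose B ** X ** B) = R + transpose B ** X ** (B::real^'n::finite^'n)"
  using assms by (simp add: transpose_add matrix_transpose_mul matrix_mul_assoc)

lemma S_pd:
  fixes R B X :: "real^'n::finite^'n"
  assumes R: "\<forall>u. u \<noteq> 0 \<longrightarrow> 0 < qf R u" and X: "\<forall>x. 0 \<le> qf X x"
  shows "\<forall>u. u \<noteq> 0 \<longrightarrow> 0 < qf (R + transpose B ** X ** B) u"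
  using R X by (simp add: qf_add qf_congr add_pos_nonneg)

lemma completion:
  fixes R B Y :: "real^'n::finite^'n" and a u :: "real^'n"
  assumes symY: "transpose Y = Y" and symR: "transpose R = R"
    and inv: "invertible (R + transpose B ** Y ** B)"
  defines "S \<equiv> R + transpose B ** Y ** B"
  defines "w \<equiv> transpose B *v (Y *v a)"
  shows "qf Y (a + B *v u) + qf R u = qf Y a - w \<bullet> (matrix_inv S *v w) + qf S (u + matrix_inv S *v w)"
proof -
  define k where "k = matrix_inv S *v w"
  have symS: "transpose S = S" unfolding S_def using sym_S[OF symR symY] .
  have Sk: "S *v k = w" unfolding k_def using inv_vec(1)[OF inv[folded S_def]] .
  have wk: "w \<bullet> k = qf S k" unfolding qf_def using Sk by (simp add: inner_commute)
  have q1: "qf S (u + k) = qf S u + 2 * (u \<bullet> w) + qf S k"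
    using qf_expand[OF symS, of u k] Sk by simp
  have q2: "qf Y (a + B *v u) = qf Y a + 2 * (a \<bullet> (Y *v (B *v u))) + qf Y (B *v u)"
    by (rule qf_expand[OF symY])
  have q3: "a \<bullet> (Y *v (B *v u)) = u \<bullet> w"
  proof -
    have "a \<bullet> (Y *v (B *v u)) = (Y *v a) \<bullet> (B *v u)" by (rule sym_dot[OF symY])
    also have "\<dots> = w \<bullet> u" unfolding w_def by (rule dot_transp2[symmetric])
    finally show ?thesis by (simp add: inner_commute)
  qed
  have q4: "qf S u = qf R u + qf Y (B *v u)" unfolding S_def by (simp add: qf_add qf_congr)
  show ?thesis using q1 q2 q3 q4 wk unfolding k_def[symmetric] by (simp add: inner_commute)
qed

lemma qf_gm:
  fixes A B Q R X :: "real^'n::finite^'n"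
  assumes symX: "transpose X = X"
  shows "qf (gm A B Q R p X) x = qf Q x + qf X (A *v x)
     - (1 - p) * ((transpose B *v (X *v (A *v x))) \<bullet> (matrix_inv (R + transpose B ** X ** B) *v (transpose B *v (X *v (A *v x)))))"
  unfolding gm_def by (simp add: qf_add qf_diff qf_scale qf_congr qf_chain[OF symX])



lemma mv_uminus: "A *v (- x) = - (A *v (x::real^'n::finite))"
  by (simp add: matrix_vector_mult_def vec_eq_iff sum_negf)

lemma pd_psd: assumes "\<forall>x. x \<noteq> 0 \<longrightarrow> 0 < qf M x" shows "0 \<le> qf M x"
  using assms by (cases "x = 0") (auto simp: qf_def less_imp_le)

lemma lmin_pos: assumes "transpose M = M" "\<forall>x. x \<noteq> 0 \<longrightarrow> 0 < qf M x"
  shows "lambda_min M > 0"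
proof -
  obtain v where "norm v = 1" "qf M v = lambda_min M" using lmin(2)[OF assms(1)] by blast
  moreover have "v \<noteq> 0" using \<open>norm v = 1\<close> by auto
  ultimately show ?thesis using assms(2) by metis
qed

lemma lmax_pos: assumes "transpose M = M" "\<forall>x. x \<noteq> 0 \<longrightarrow> 0 < qf M x"
  shows "lambda_max M > 0"
proof -
  obtain v where "norm v = 1" "qf M v = lambda_max M" using lmax(2)[OF assms(1)] by blast
  moreover have "v \<noteq> 0" using \<open>norm v = 1\<close> by auto
  ultimately show ?thesis using assms(2) by metis
qed

lemma compare:
  fixes A B Q R X Y :: "real^'n::finite^'n"
  assumes Qpd: "\<forall>x. x \<noteq> 0 \<longrightarrow> 0 < qf Q x" and Qsym: "transpose Q = Q"
    and Rpd: "\<forall>x. x \<noteq> 0 \<longrightarrow> 0 < qf R x" and Rsym: "transpose R = R"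
    and p: "0 \<le> p" "p \<le> 1"
    and Ysym: "transpose Y = Y" and Ypsd: "\<forall>x. 0 \<le> qf Y x"
    and Ysub: "\<forall>x. qf Y x \<le> qf (gm A B Q R p Y) x"
    and Xsym: "transpose X = X" and Xpd: "\<forall>x. x \<noteq> 0 \<longrightarrow> 0 < qf X x"
    and Xsup: "\<forall>x. qf (gm A B Q R p X) x \<le> qf X x"
  shows "qf Y x \<le> qf X x"
proof -
  have Xpsd: "\<forall>x. 0 \<le> qf X x" using pd_psd[OF Xpd] by blast
  define SX where "SX = R + transpose B ** X ** B"
  define SY where "SY = R + transpose B ** Y ** B"
  have invX: "invertible SX" unfolding SX_def using S_pd[OF Rpd Xpsd] pd_invertible by blast
  have invY: "invertible SY" unfolding SY_def using S_pd[OF Rpd Ypsd] pd_invertible by blast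
  define wX where "wX x = transpose B *v (X *v (A *v x))" for x
  define wY where "wY x = transpose B *v (Y *v (A *v x))" for x
  define kX where "kX x = matrix_inv SX *v wX x" for x
  define F where "F x = A *v x - B *v kX x" for x
  define Lf where "Lf \<phi> x = (1 - p) * \<phi> (F x) + p * \<phi> (A *v x)" for \<phi> :: "real^'n \<Rightarrow> real" and x
  have gX: "qf (gm A B Q R p X) x = qf Q x + p * qf X (A *v x) + (1 - p) * (qf X (F x) + qf R (kX x))" for x
  proof -
    have c: "qf X (A *v x + B *v (- kX x)) + qf R (- kX x) = qf X (A *v x) - wX x \<bullet> (matrix_inv SX *v wX x) + qf SX (- kX x + matrix_inv SX *v wX x)"
      using completion[OF Xsym Rsym invX[unfolded SX_def], of "A *v x" "- kX x"] unfolding SX_def wX_def by simp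
    have "qf SX (- kX x + matrix_inv SX *v wX x) = 0" unfolding kX_def by (simp add: qf_def)
    moreover have "qf R (- kX x) = qf R (kX x)" using qf_scaleR_vec[of R "-1" "kX x"] by simp
    moreover have "A *v x + B *v (- kX x) = F x" unfolding F_def by (simp add: mv_uminus)
    ultimately have e: "qf X (F x) + qf R (kX x) = qf X (A *v x) - wX x \<bullet> (matrix_inv SX *v wX x)" using c by simp
    hence e': "qf X (A *v x) = qf X (F x) + qf R (kX x) + wX x \<bullet> (matrix_inv SX *v wX x)" by simp
    show ?thesis unfolding qf_gm[OF Xsym] wX_def[symmetric] SX_def[symmetric]
      by (subst (1 2) e') (simp add: algebra_simps)
  qed
  have gY: "qf (gm A B Q R p Y) x \<le> qf Q x + p * qf Y (A *v x) + (1 - p) * (qf Y (F x) + qf R (kX x))" for x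
  proof -
    have c: "qf Y (A *v x + B *v (- kX x)) + qf R (- kX x) = qf Y (A *v x) - wY x \<bullet> (matrix_inv SY *v wY x) + qf SY (- kX x + matrix_inv SY *v wY x)"
      using completion[OF Ysym Rsym invY[unfolded SY_def], of "A *v x" "- kX x"] unfolding SY_def wY_def by simp
    have "qf SY (- kX x + matrix_inv SY *v wY x) \<ge> 0" unfolding SY_def using pd_psd[OF S_pd[OF Rpd Ypsd]] by blast
    moreover have "qf R (- kX x) = qf R (kX x)" using qf_scaleR_vec[of R "-1" "kX x"] by simp
    moreover have "A *v x + B *v (- kX x) = F x" unfolding F_def by (simp add: mv_uminus)
    ultimately have e: "qf Y (A *v x) - wY x \<bullet> (matrix_inv SY *v wY x) \<le> qf Y (F x) + qf R (kX x)" using c by simp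
    have "qf (gm A B Q R p Y) x = qf Q x + p * qf Y (A *v x) + (1 - p) * (qf Y (A *v x) - wY x \<bullet> (matrix_inv SY *v wY x))"
      unfolding qf_gm[OF Ysym] wY_def[symmetric] SY_def[symmetric] by (simp add: algebra_simps)
    also have "\<dots> \<le> qf Q x + p * qf Y (A *v x) + (1 - p) * (qf Y (F x) + qf R (kX x))"
      using e p by (simp add: mult_left_mono)
    finally show ?thesis .
  qed
  define D where "D x = qf X x - qf Y x" for x
  have DL: "Lf D x \<le> D x" for x
  proof -
    have "qf X x \<ge> qf Q x + p * qf X (A *v x) + (1 - p) * (qf X (F x) + qf R (kX x))" using Xsup[rule_format, of x] gX[of x] by simp
    moreover have "qf Y x \<le> qf Q x + p * qf Y (A *v x) + (1 - p) * (qf Y (F x) + qf R (kX x))" using Ysub[rule_format, of x] gY[of x] by simp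
    ultimately show ?thesis unfolding D_def Lf_def by (simp add: algebra_simps)
  qed
  have LX: "Lf (qf X) x \<le> qf X x - qf Q x" for x
  proof -
    have "qf X x \<ge> qf Q x + p * qf X (A *v x) + (1 - p) * (qf X (F x) + qf R (kX x))" using Xsup[rule_format, of x] gX[of x] by simp
    moreover have "0 \<le> (1 - p) * qf R (kX x)" using p pd_psd[OF Rpd] by simp
    ultimately show ?thesis unfolding Lf_def by (simp add: algebra_simps)
  qed
  have mono: "Lf \<phi> x \<le> Lf \<psi> x" if "\<forall>y. \<phi> y \<le> \<psi> y" for \<phi> \<psi> x
    unfolding Lf_def using that p by (simp add: add_mono mult_left_mono)
  have Qb: "\<forall>x. lambda_min Q * (x \<bullet> x) \<le> qf Q x" using lmin(1)[OF Qsym] .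
  have Qpos: "lambda_min Q > 0" by (rule lmin_pos[OF Qsym Qpd])
  have Xb: "\<forall>x. qf X x \<le> lambda_max X * (x \<bullet> x)" using lmax(1)[OF Xsym] .
  have Xpos: "lambda_max X > 0" by (rule lmax_pos[OF Xsym Xpd])
  have Xb2: "\<forall>x. lambda_min X * (x \<bullet> x) \<le> qf X x" using lmin(1)[OF Xsym] .
  have Xpos2: "lambda_min X > 0" by (rule lmin_pos[OF Xsym Xpd])
  have Yb: "\<forall>x. qf Y x \<le> lambda_max Y * (x \<bullet> x)" using lmax(1)[OF Ysym] .
  define \<epsilon> where "\<epsilon> = min (lambda_min Q / lambda_max X) (1/2)"
  define r where "r = 1 - \<epsilon>"
  have eps: "\<epsilon> > 0" "\<epsilon> \<le> 1/2" unfolding \<epsilon>_def using Qpos Xpos by (auto simp: min_def)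
  have Qeps: "\<epsilon> * qf X x \<le> qf Q x" for x
  proof -
    have "\<epsilon> \<le> lambda_min Q / lambda_max X" unfolding \<epsilon>_def by simp
    hence "\<epsilon> * qf X x \<le> (lambda_min Q / lambda_max X) * qf X x"
      using Xpsd by (intro mult_right_mono) auto
    also have "\<dots> \<le> (lambda_min Q / lambda_max X) * (lambda_max X * (x \<bullet> x))"
      by (rule mult_left_mono) (use Xb Qpos Xpos in auto)
    also have "\<dots> = lambda_min Q * (x \<bullet> x)" using Xpos by simp
    also have "\<dots> \<le> qf Q x" using Qb by blast
    finally show ?thesis .
  qed
  have LXr: "Lf (qf X) x \<le> r * qf X x" for x using LX[of x] Qeps[of x] unfolding r_def by (simp add: algebra_simps)
  have r: "0 \<le> r" "r < 1" unfolding r_def using eps by auto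
  define c where "c = max 0 (lambda_max Y / lambda_min X)"
  have c0: "c \<ge> 0" unfolding c_def by simp
  have Dlow: "- c * qf X x \<le> D x" for x
  proof -
    have "qf Y x \<le> lambda_max Y * (x \<bullet> x)" using Yb by blast
    also have "\<dots> \<le> c * (lambda_min X * (x \<bullet> x))"
    proof -
      have "lambda_max Y / lambda_min X \<le> c" unfolding c_def by simp
      hence "lambda_max Y \<le> c * lambda_min X" using Xpos2 by (simp add: pos_divide_le_eq)
      thus ?thesis by (simp add: mult_right_mono mult.assoc[symmetric])
    qed
    also have "\<dots> \<le> c * qf X x" using Xb2 c0 by (simp add: mult_left_mono)
    finally show ?thesis unfolding D_def using Xpsd[rule_format, of x] by simp
  qed
  have iter: "\<forall>x. - c * r^k * qf X x \<le> (Lf ^^ k) D x" for k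
  proof (induction k)
    case 0 thus ?case using Dlow by simp
  next
    case (Suc k)
    show ?case
    proof
      fix x
      have "Lf (\<lambda>y. - c * r^k * qf X y) x \<le> Lf ((Lf ^^ k) D) x" by (rule mono) (use Suc in simp)
      moreover have "Lf (\<lambda>y. - c * r^k * qf X y) x = - c * r^k * Lf (qf X) x"
        unfolding Lf_def by (simp add: algebra_simps)
      moreover have "- c * r^k * Lf (qf X) x \<ge> - c * r^k * (r * qf X x)"
        using LXr[of x] c0 r by (simp add: mult_left_mono)
      ultimately show "- c * r^Suc k * qf X x \<le> (Lf ^^ Suc k) D x" by (simp add: algebra_simps)
    qed
  qed
  have down: "\<forall>x. (Lf ^^ k) D x \<le> D x" for k
  proof (induction k)
    case 0 thus ?case by simp
  next
    case (Suc k)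
    show ?case
    proof
      fix x
      have "(Lf ^^ Suc k) D x = Lf ((Lf ^^ k) D) x" by simp
      also have "\<dots> \<le> Lf D x" by (rule mono) (use Suc in simp)
      also have "\<dots> \<le> D x" by (rule DL)
      finally show "(Lf ^^ Suc k) D x \<le> D x" .
    qed
  qed
  have bnd: "- c * r^k * qf X x \<le> D x" for k using iter[of k] down[of k] by (meson order_trans)
  have lim: "(\<lambda>k. - c * r^k * qf X x) \<longlonglongrightarrow> - c * 0 * qf X x"
    by (intro tendsto_intros LIMSEQ_power_zero) (use r in simp)
  have "- c * 0 * qf X x \<le> D x" by (rule LIMSEQ_le_const2[OF lim]) (use bnd in blast)
  thus ?thesis unfolding D_def by simp
qed



lemma pos_def_qf: "pos_def M \<longleftrightarrow> transpose M = M \<and> (\<forall>x. x \<noteq> 0 \<longrightarrow> 0 < qf M x)"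
  by (simp add: pos_def_def qf_def)

lemma psol:
  fixes A B Q R :: "real^'n::finite^'n"
  assumes "0 \<le> p" "p < q_crit A B Q R"
  shows "pos_def (Psol A B Q R p) \<and> mare A B Q R p (Psol A B Q R p)"
proof -
  define S where "S = {c. 0 \<le> c \<and> c \<le> 1 \<and>
      (\<forall>p. 0 \<le> p \<and> p < c \<longrightarrow> (\<exists>!X. pos_def X \<and> mare A B Q R p X))}"
  have "0 \<in> S" unfolding S_def by auto
  hence ne: "S \<noteq> {}" by blast
  have bdd: "bdd_above S" unfolding S_def by (rule bdd_aboveI[of _ 1]) auto
  have "p < Sup S" using assms(2) unfolding q_crit_def S_def by simp
  then obtain c where "c \<in> S" "p < c" using less_cSup_iff[OF ne bdd] by blast
  hence "\<exists>!X. pos_def X \<and> mare A B Q R p X" using assms(1) unfolding S_def by blast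
  thus ?thesis unfolding Psol_def by (rule theI')
qed

lemma W_nonneg:
  fixes S :: "real^'n::finite^'n"
  assumes "transpose S = S" "invertible S" "\<forall>u. 0 \<le> qf S u"
  shows "0 \<le> w \<bullet> (matrix_inv S *v w)"
proof -
  define k where "k = matrix_inv S *v w"
  have "w = S *v k" unfolding k_def using inv_vec(1)[OF assms(2)] by simp
  hence "w \<bullet> k = qf S k" unfolding qf_def using sym_dot[OF assms(1), of k k] by (simp add: inner_commute)
  thus ?thesis using assms(3) unfolding k_def by simp
qed

lemma gm_mono_p:
  fixes A B Q R X :: "real^'n::finite^'n"
  assumes "transpose X = X" "\<forall>x. 0 \<le> qf X x" "transpose R = R" "\<forall>x. x \<noteq> 0 \<longrightarrow> 0 < qf R x" "p \<le> q"
  shows "qf (gm A B Q R p X) x \<le> qf (gm A B Q R q X) x"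
proof -
  define S where "S = R + transpose B ** X ** B"
  have Ssym: "transpose S = S" unfolding S_def by (rule sym_S[OF assms(3,1)])
  have Spd: "\<forall>u. u \<noteq> 0 \<longrightarrow> 0 < qf S u" unfolding S_def by (rule S_pd[OF assms(4,2)])
  define W where "W = (transpose B *v (X *v (A *v x))) \<bullet> (matrix_inv S *v (transpose B *v (X *v (A *v x))))"
  have W0: "0 \<le> W" unfolding W_def
    by (rule W_nonneg[OF Ssym pd_invertible[OF Spd]]) (use pd_psd[OF Spd] in blast)
  have "(1 - q) * W \<le> (1 - p) * W" by (rule mult_right_mono) (use W0 assms(5) in auto)
  thus ?thesis unfolding qf_gm[OF assms(1)] S_def[symmetric] W_def[symmetric] by simp
qed

lemma mono_P:
  fixes A B Q R :: "real^'n::finite^'n"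
  assumes Q: "pos_def Q" and R: "pos_def R" and p: "0 \<le> p" "p \<le> q" and q: "q < q_crit A B Q R" "q \<le> 1"
  shows "qf (Psol A B Q R p) x \<le> qf (Psol A B Q R q) x"
proof -
  have sp: "pos_def (Psol A B Q R p) \<and> mare A B Q R p (Psol A B Q R p)" by (intro psol) (use p q in auto)
  have sq: "pos_def (Psol A B Q R q) \<and> mare A B Q R q (Psol A B Q R q)" by (intro psol) (use p q in auto)
  let ?Y = "Psol A B Q R p" and ?X = "Psol A B Q R q"
  have Q': "\<forall>x. x \<noteq> 0 \<longrightarrow> 0 < qf Q x" "transpose Q = Q" using Q by (auto simp: pos_def_qf)
  have R': "\<forall>x. x \<noteq> 0 \<longrightarrow> 0 < qf R x" "transpose R = R" using R by (auto simp: pos_def_qf)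
  have Y: "transpose ?Y = ?Y" "\<forall>x. x \<noteq> 0 \<longrightarrow> 0 < qf ?Y x" using sp by (auto simp: pos_def_qf)
  have X: "transpose ?X = ?X" "\<forall>x. x \<noteq> 0 \<longrightarrow> 0 < qf ?X x" using sq by (auto simp: pos_def_qf)
  have eqY: "gm A B Q R p ?Y = ?Y" using sp unfolding mare_gm by (simp only:)
  have eqX: "gm A B Q R q ?X = ?X" using sq unfolding mare_gm by (simp only:)
  have Ysub: "\<forall>x. qf ?Y x \<le> qf (gm A B Q R p ?Y) x" by (simp only: eqY order_refl simp_thms)
  have Xsup: "\<forall>x. qf (gm A B Q R p ?X) x \<le> qf ?X x"
  proof
    fix x
    have "qf (gm A B Q R p ?X) x \<le> qf (gm A B Q R q ?X) x"
      by (rule gm_mono_p[OF X(1) _ R'(2) R'(1) p(2)]) (use pd_psd[OF X(2)] in blast)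
    also have "\<dots> = qf ?X x" by (simp only: eqX)
    finally show "qf (gm A B Q R p ?X) x \<le> qf ?X x" .
  qed
  show ?thesis
  proof (rule compare[OF Q'(1,2) R'(1,2) p(1) _ Y(1) _ Ysub X(1) X(2) Xsup])
    show "p \<le> 1" using p q by linarith
    show "\<forall>x. 0 \<le> qf ?Y x" using pd_psd[OF Y(2)] by blast
  qed
qed

lemma cs_psd:
  fixes M :: "real^'n::finite^'n"
  assumes sym: "transpose M = M" and psd: "\<forall>x. 0 \<le> qf M x"
  shows "(M *v v) \<bullet> (M *v v) \<le> lambda_max M * qf M v"
proof -
  define u where "u = M *v v"
  define b where "b = u \<bullet> u"
  have "\<forall>t. 0 \<le> qf M u + 2 * b * t + qf M v * t^2"
  proof
    fix t
    have "qf M (u + t *\<^sub>R v) = qf M u + 2 * (u \<bullet> (M *v (t *\<^sub>R v))) + qf M (t *\<^sub>R v)"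
      by (rule qf_expand[OF sym])
    also have "\<dots> = qf M u + 2 * b * t + qf M v * t^2"
      unfolding b_def u_def by (simp add: matrix_vector_mult_scaleR qf_scaleR_vec algebra_simps)
    finally show "0 \<le> qf M u + 2 * b * t + qf M v * t^2" using psd by metis
  qed
  note all = this
  have c0: "0 \<le> qf M v" using psd by blast
  have d: "b^2 \<le> qf M u * qf M v" by (rule discr[OF all c0])
  have lm: "qf M u \<le> lambda_max M * b" using lmax(1)[OF sym] unfolding b_def by blast
  obtain w where w: "norm w = 1" "qf M w = lambda_max M" using lmax(2)[OF sym] by blast
  have l0: "0 \<le> lambda_max M" using w psd by metis
  have "qf M u * qf M v \<le> (lambda_max M * b) * qf M v" by (rule mult_right_mono[OF lm c0])
  hence bb: "b * b \<le> b * (lambda_max M * qf M v)" using d unfolding power2_eq_square by (simp add: algebra_simps)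
  have b0: "b \<ge> 0" unfolding b_def by simp
  have "b \<le> lambda_max M * qf M v"
  proof (cases "b = 0")
    case True thus ?thesis using l0 c0 by simp
  next
    case False
    hence "0 < b" using b0 by simp
    thus ?thesis using bb by (simp add: mult_le_cancel_left_pos)
  qed
  thus ?thesis unfolding b_def u_def .
qed

lemma real_core:
  fixes \<delta> lam qQ rr s pa lamR Lam X2 q :: real
  assumes "0 < \<delta>" "\<delta> < lam" "0 < qQ" "0 \<le> rr" "qQ + (1-q)*rr \<le> \<delta> * s" "0 \<le> 1-q"
    "s \<le> pa" "0 < pa" "lamR * s \<le> Lam * rr" "0 < Lam" "0 \<le> lamR"
    "X2 \<le> lamR * pa / Lam" "lam * pa \<le> qQ + (1-q)*X2"
  shows False
proof -
  have "0 \<le> (1-q)*rr" using assms(4,6) by simp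
  hence "0 < \<delta> * s" using assms(3,5) by linarith
  hence s: "0 < s" using assms(1) by (simp add: zero_less_mult_iff)
  have "lamR * pa / Lam \<le> rr * pa / s"
  proof -
    have "lamR * s * pa \<le> Lam * rr * pa" using assms(9,8) by (simp add: mult_right_mono)
    thus ?thesis using s assms(10) by (simp add: field_simps)
  qed
  hence X2: "X2 \<le> rr * pa / s" using assms(12) by linarith
  have r1: "1 \<le> pa / s" using s assms(7) by simp
  have "qQ * 1 \<le> qQ * (pa / s)" by (rule mult_left_mono) (use r1 assms(3) in auto)
  hence qf1: "qQ \<le> qQ * (pa / s)" by simp
  have "(1-q)*X2 \<le> (1-q)*(rr*pa/s)" by (rule mult_left_mono) (use X2 assms(6) in auto)
  hence "lam * pa \<le> qQ + (1-q) * (rr * pa / s)" using assms(13) by linarith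
  also have "\<dots> \<le> qQ * (pa / s) + (1-q) * (rr * pa / s)" using qf1 by simp
  also have "\<dots> = (qQ + (1-q)*rr) * pa / s" using s by (simp add: field_simps)
  also have "\<dots> \<le> \<delta> * s * pa / s"
    by (intro divide_right_mono mult_right_mono) (use assms(5,8) s in auto)
  also have "\<dots> = \<delta> * pa" using s by simp
  finally have "lam \<le> \<delta>" using assms(8) by simp
  thus False using assms(2) by simp
qed



lemma real_lam:
  fixes lamT nv nz g :: real
  assumes "0 < lamT" "lamT * nv^2 \<le> g" "g \<le> nv * nz" "0 \<le> nv" "0 \<le> nz"
  shows "lamT * g \<le> nz^2"
proof (cases "nv = 0")
  case True
  hence "g \<le> 0" using assms(3) by simp
  hence "lamT * g \<le> 0" using assms(1) by (simp add: mult_nonneg_nonpos)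
  thus ?thesis by (smt (verit) zero_le_power2)
next
  case False
  hence nv: "0 < nv" using assms(4) by simp
  have "nv * (lamT * nv) \<le> nv * nz" using assms(2,3) by (simp add: power2_eq_square algebra_simps)
  hence l: "lamT * nv \<le> nz" using nv by (simp add: mult_le_cancel_left_pos)
  have "lamT * g \<le> lamT * (nv * nz)" using assms(1,3) by (simp add: mult_left_mono)
  also have "\<dots> = (lamT * nv) * nz" by simp
  also have "\<dots> \<le> nz * nz" using l assms(5) by (simp add: mult_right_mono)
  finally show ?thesis by (simp add: power2_eq_square)
qed

lemma lam_bound:
  fixes M G :: "real^'n::finite^'n"
  assumes Mpsd: "pos_semidef M" and Mpd: "\<forall>x. x \<noteq> 0 \<longrightarrow> 0 < qf M x"
    and Gsym: "transpose G = G" and Gpd: "\<forall>x. x \<noteq> 0 \<longrightarrow> 0 < qf G x"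
  shows "lambda_min (msqrt M ** matrix_inv G ** msqrt M) * qf G x \<le> qf M x"
proof -
  define Xi where "Xi = msqrt M"
  have Xpsd: "pos_semidef Xi" and XX: "Xi ** Xi = M" unfolding Xi_def using msqrt_props[OF Mpsd] by auto
  have Xsym: "transpose Xi = Xi" using Xpsd unfolding pos_semidef_def by blast
  have Minv: "invertible M" by (rule pd_invertible[OF Mpd])
  have "Xi ** (Xi ** matrix_inv M) = mat 1" using XX inv_props(1)[OF Minv] by (simp add: matrix_mul_assoc)
  hence Xinv: "invertible Xi" using invertible_right_inverse by blast
  define Xii where "Xii = matrix_inv Xi"
  have Xiisym: "transpose Xii = Xii" unfolding Xii_def by (rule inv_sym[OF Xinv Xsym])
  have Ginv: "invertible G" by (rule pd_invertible[OF Gpd])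
  define N where "N = matrix_inv G"
  have Nsym: "transpose N = N" unfolding N_def by (rule inv_sym[OF Ginv Gsym])
  define T where "T = Xi ** N ** Xi"
  have Tsym: "transpose T = T" unfolding T_def using Xsym Nsym by (simp add: matrix_transpose_mul matrix_mul_assoc)
  define lamT where "lamT = lambda_min T"
  have ray: "\<forall>y. lamT * (y \<bullet> y) \<le> qf T y" unfolding lamT_def by (rule lmin(1)[OF Tsym])
  have g0: "0 \<le> qf G x" by (rule pd_psd[OF Gpd])
  have m0: "0 \<le> qf M x" by (rule pd_psd[OF Mpd])
  have "lamT * qf G x \<le> qf M x"
  proof (cases "lamT \<le> 0")
    case True
    hence "lamT * qf G x \<le> 0" using g0 by (simp add: mult_nonpos_nonneg)
    thus ?thesis using m0 by linarith
  next
    case False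
    hence lp: "0 < lamT" by simp
    define v where "v = Xii *v (G *v x)"
    have Tv: "T *v v = Xi *v x"
    proof -
      have "T *v v = Xi *v (N *v (Xi *v (Xii *v (G *v x))))" unfolding T_def v_def by (simp add: matrix_vector_mul_assoc matrix_mul_assoc)
      also have "Xi *v (Xii *v (G *v x)) = G *v x" unfolding Xii_def by (rule inv_vec(1)[OF Xinv])
      also have "N *v (G *v x) = x" unfolding N_def by (rule inv_vec(2)[OF Ginv])
      finally show ?thesis .
    qed
    have qTv: "qf T v = qf G x"
    proof -
      have "qf T v = (Xii *v (G *v x)) \<bullet> (Xi *v x)" unfolding qf_def using Tv v_def by simp
      also have "\<dots> = (G *v x) \<bullet> (Xii *v (Xi *v x))" using sym_dot[OF Xiisym, of "G *v x" "Xi *v x"] by simp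
      also have "Xii *v (Xi *v x) = x" unfolding Xii_def by (rule inv_vec(2)[OF Xinv])
      finally show ?thesis unfolding qf_def by (simp add: inner_commute)
    qed
    have nz: "(Xi *v x) \<bullet> (Xi *v x) = qf M x"
    proof -
      have "(Xi *v x) \<bullet> (Xi *v x) = x \<bullet> (Xi *v (Xi *v x))" using sym_dot[OF Xsym, of x "Xi *v x"] by simp
      thus ?thesis unfolding qf_def using XX by (simp add: matrix_vector_mul_assoc)
    qed
    have cs: "qf G x \<le> norm v * norm (Xi *v x)"
    proof -
      have "qf G x = v \<bullet> (Xi *v x)" using qTv Tv unfolding qf_def by simp
      thus ?thesis using norm_cauchy_schwarz by metis
    qed
    have r: "lamT * (norm v)^2 \<le> qf G x" using ray qTv by (metis dot_square_norm)
    have "lamT * qf G x \<le> (norm (Xi *v x))^2" by (rule real_lam[OF lp r cs]) auto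
    thus ?thesis using nz by (simp add: dot_square_norm)
  qed
  thus ?thesis unfolding lamT_def T_def Xi_def N_def .
qed

lemma eig_BBt:
  fixes B :: "real^'n::finite^'n"
  assumes "invertible B"
  shows "lambda_min (B ** transpose B) = lambda_min (transpose B ** B)"
proof -
  have Bt: "invertible (transpose B)" by (rule transpose_invertible[OF assms])
  have inj1: "B *v w \<noteq> 0" if "w \<noteq> 0" for w using that inv_vec(2)[OF assms, of w] by force
  have inj2: "transpose B *v w \<noteq> 0" if "w \<noteq> 0" for w using that inv_vec(2)[OF Bt, of w] by force
  have "is_eigenvalue (B ** transpose B) l \<longleftrightarrow> is_eigenvalue (transpose B ** B) l" for l
  proof
    assume "is_eigenvalue (B ** transpose B) l"
    then obtain w where w: "w \<noteq> 0" "(B ** transpose B) *v w = l *\<^sub>R w" unfolding is_eigenvalue_def by blast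
    have "(transpose B ** B) *v (transpose B *v w) = transpose B *v ((B ** transpose B) *v w)"
      by (simp only: matrix_vector_mul_assoc matrix_mul_assoc)
    also have "\<dots> = l *\<^sub>R (transpose B *v w)" using w(2) by (simp only: matrix_vector_mult_scaleR)
    finally show "is_eigenvalue (transpose B ** B) l" unfolding is_eigenvalue_def using inj2[OF w(1)] by blast
  next
    assume "is_eigenvalue (transpose B ** B) l"
    then obtain w where w: "w \<noteq> 0" "(transpose B ** B) *v w = l *\<^sub>R w" unfolding is_eigenvalue_def by blast
    have "(B ** transpose B) *v (B *v w) = B *v ((transpose B ** B) *v w)"
      by (simp only: matrix_vector_mul_assoc matrix_mul_assoc)
    also have "\<dots> = l *\<^sub>R (B *v w)" using w(2) by (simp add: matrix_vector_mult_scaleR)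
    finally show "is_eigenvalue (B ** transpose B) l" unfolding is_eigenvalue_def using inj1[OF w(1)] by blast
  qed
  hence "{l. is_eigenvalue (B ** transpose B) l} = {l. is_eigenvalue (transpose B ** B) l}" by blast
  thus ?thesis unfolding lambda_min_def by simp
qed



theorem theorem5:
  fixes A Q R B :: "real ^ 'n::finite ^ 'n" and q :: real
  assumes "stabilizable A B"
    and "pos_def Q" and "pos_def R"
    and "0 < q" and "q < 1"
    and "q < q_crit A B Q R"
    and "invertible B" and "invertible A"
  shows "ereal (let P = Psol A B Q R q; P0 = Psol A B Q R 0;
                    c2 = lambda_min R * lambda_min (B ** transpose B)
                         / (lambda_max (R + transpose B ** P ** B))\<^sup>2;
                    Xi = msqrt (Q + ((1 - q) * c2) *\<^sub>R (transpose A ** P0 ** P0 ** A))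
                in lambda_min (Xi ** matrix_inv (transpose A ** P ** A) ** Xi))
         \<le> delta_bar A B Q R q"
proof -
  note Qd = assms(2) and Rd = assms(3) and q0 = assms(4) and q1 = assms(5) and qc = assms(6)
    and Binv = assms(7) and Ainv = assms(8)
  define P where "P = Psol A B Q R q"
  define P0 where "P0 = Psol A B Q R 0"
  define SQ where "SQ = R + transpose B ** P ** B"
  define Lam where "Lam = lambda_max SQ"
  define lamR where "lamR = lambda_min R"
  define muB where "muB = lambda_min (B ** transpose B)"
  define c2 where "c2 = lamR * muB / Lam\<^sup>2"
  define M where "M = Q + ((1 - q) * c2) *\<^sub>R (transpose A ** P0 ** P0 ** A)"
  define G where "G = transpose A ** P ** A"
  define lam where "lam = lambda_min (msqrt M ** matrix_inv G ** msqrt M)"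
  have lhs: "(let P = Psol A B Q R q; P0 = Psol A B Q R 0;
                    c2 = lambda_min R * lambda_min (B ** transpose B)
                         / (lambda_max (R + transpose B ** P ** B))\<^sup>2;
                    Xi = msqrt (Q + ((1 - q) * c2) *\<^sub>R (transpose A ** P0 ** P0 ** A))
                in lambda_min (Xi ** matrix_inv (transpose A ** P ** A) ** Xi)) = lam"
    unfolding Let_def lam_def M_def c2_def Lam_def SQ_def lamR_def muB_def P_def P0_def G_def ..
  have Qs: "transpose Q = Q" and Qp: "\<forall>x. x \<noteq> 0 \<longrightarrow> 0 < qf Q x" using Qd by (auto simp: pos_def_qf)
  have Rs: "transpose R = R" and Rp: "\<forall>x. x \<noteq> 0 \<longrightarrow> 0 < qf R x" using Rd by (auto simp: pos_def_qf)
  have sP: "pos_def P \<and> mare A B Q R q P" unfolding P_def by (rule psol) (use q0 qc in auto)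
  have sP0: "pos_def P0 \<and> mare A B Q R 0 P0" unfolding P0_def by (rule psol) (use q0 qc in auto)
  have Ps: "transpose P = P" and Pp: "\<forall>x. x \<noteq> 0 \<longrightarrow> 0 < qf P x" using sP by (auto simp: pos_def_qf)
  have P0s: "transpose P0 = P0" and P0p: "\<forall>x. x \<noteq> 0 \<longrightarrow> 0 < qf P0 x" using sP0 by (auto simp: pos_def_qf)
  have mono0: "qf P0 x \<le> qf P x" for x unfolding P0_def P_def
    by (rule mono_P[OF Qd Rd]) (use q0 q1 qc in auto)
  have SQs: "transpose SQ = SQ" unfolding SQ_def by (rule sym_S[OF Rs Ps])
  have SQp: "\<forall>u. u \<noteq> 0 \<longrightarrow> 0 < qf SQ u" unfolding SQ_def by (rule S_pd[OF Rp]) (use pd_psd[OF Pp] in blast)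
  have Lam0: "0 < Lam" unfolding Lam_def by (rule lmax_pos[OF SQs SQp])
  have LamB: "qf SQ y \<le> Lam * (y \<bullet> y)" for y unfolding Lam_def using lmax(1)[OF SQs] by blast
  have lamR0: "0 < lamR" unfolding lamR_def by (rule lmin_pos[OF Rs Rp])
  have lamRB: "lamR * (y \<bullet> y) \<le> qf R y" for y unfolding lamR_def using lmin(1)[OF Rs] by blast
  have BBs: "transpose (transpose B ** B) = transpose B ** B" by (simp add: matrix_transpose_mul)
  have BBq: "qf (transpose B ** B) y = (B *v y) \<bullet> (B *v y)" for y
    unfolding qf_def by (simp add: matrix_vector_mul_assoc[symmetric] dot_vmul)
  have muB': "muB = lambda_min (transpose B ** B)" unfolding muB_def by (rule eig_BBt[OF Binv])
  have muB0: "0 \<le> muB"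
  proof -
    obtain v where "norm v = 1" "qf (transpose B ** B) v = lambda_min (transpose B ** B)" using lmin(2)[OF BBs] by blast
    thus ?thesis using BBq muB' by (metis inner_ge_zero)
  qed
  have muBB: "muB * (y \<bullet> y) \<le> (B *v y) \<bullet> (B *v y)" for y
    using lmin(1)[OF BBs] BBq muB' by metis
  have key1: "muB * lambda_max P \<le> Lam"
  proof -
    obtain v where v: "norm v = 1" "qf P v = lambda_max P" using lmax(2)[OF Ps] by blast
    define y where "y = matrix_inv B *v v"
    have By: "B *v y = v" unfolding y_def by (rule inv_vec(1)[OF Binv])
    have vv: "v \<bullet> v = 1" using v(1) by (simp add: dot_square_norm)
    have "lambda_max P = qf P (B *v y)" using v By by simp
    also have "\<dots> \<le> qf R y + qf P (B *v y)" using pd_psd[OF Rp] by simp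
    also have "\<dots> = qf SQ y" unfolding SQ_def by (simp add: qf_add qf_congr)
    also have "\<dots> \<le> Lam * (y \<bullet> y)" by (rule LamB)
    finally have l1: "lambda_max P \<le> Lam * (y \<bullet> y)" .
    have l2: "muB * (y \<bullet> y) \<le> 1" using muBB[of y] By vv by simp
    have "muB * lambda_max P \<le> muB * (Lam * (y \<bullet> y))" by (rule mult_left_mono[OF l1 muB0])
    also have "\<dots> = Lam * (muB * (y \<bullet> y))" by simp
    also have "\<dots> \<le> Lam * 1" by (rule mult_left_mono[OF l2]) (use Lam0 in simp)
    finally show ?thesis by simp
  qed
  have lmP0: "lambda_max P0 \<le> lambda_max P"
  proof -
    obtain v where v: "norm v = 1" "qf P0 v = lambda_max P0" using lmax(2)[OF P0s] by blast
    have "qf P v \<le> lambda_max P * (v \<bullet> v)" using lmax(1)[OF Ps] by blast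
    also have "v \<bullet> v = 1" using v(1) by (simp add: dot_square_norm)
    finally show ?thesis using v(2) mono0[of v] by simp
  qed
  have lmP00: "0 \<le> lambda_max P0"
  proof -
    obtain v where v: "norm v = 1" "qf P0 v = lambda_max P0" using lmax(2)[OF P0s] by blast
    thus ?thesis using pd_psd[OF P0p, of v] by simp
  qed
  have key2: "(P0 *v a) \<bullet> (P0 *v a) \<le> lambda_max P * qf P a" for a
  proof -
    have "(P0 *v a) \<bullet> (P0 *v a) \<le> lambda_max P0 * qf P0 a"
      by (rule cs_psd[OF P0s]) (use pd_psd[OF P0p] in blast)
    also have "\<dots> \<le> lambda_max P * qf P a"
      by (rule mult_mono[OF lmP0 mono0]) (use lmP00 lmP0 pd_psd[OF P0p] in auto)
    finally show ?thesis .
  qed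
  have c20: "0 \<le> c2" unfolding c2_def using lamR0 muB0 by simp
  have key3: "c2 * ((P0 *v a) \<bullet> (P0 *v a)) \<le> lamR * qf P a / Lam" for a
  proof -
    have pa0: "0 \<le> qf P a" by (rule pd_psd[OF Pp])
    have "c2 * ((P0 *v a) \<bullet> (P0 *v a)) \<le> c2 * (lambda_max P * qf P a)" by (rule mult_left_mono[OF key2 c20])
    also have "\<dots> = lamR * (muB * lambda_max P) * qf P a / Lam^2" unfolding c2_def by simp
    also have "\<dots> \<le> lamR * Lam * qf P a / Lam^2"
      by (intro divide_right_mono mult_right_mono mult_left_mono key1) (use lamR0 pa0 in auto)
    also have "\<dots> = lamR * qf P a / Lam" using Lam0 by (simp add: power2_eq_square)
    finally show ?thesis .
  qed
  have Mq: "qf M x = qf Q x + (1 - q) * (c2 * ((P0 *v (A *v x)) \<bullet> (P0 *v (A *v x))))" for x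
  proof -
    have "transpose A ** P0 ** P0 ** A = transpose A ** (P0 ** P0) ** A" by (simp add: matrix_mul_assoc)
    hence "qf (transpose A ** P0 ** P0 ** A) x = qf (P0 ** P0) (A *v x)" by (simp add: qf_congr)
    also have "\<dots> = (A *v x) \<bullet> (P0 *v (P0 *v (A *v x)))" unfolding qf_def by (simp only: matrix_vector_mul_assoc matrix_mul_assoc)
    also have "\<dots> = (P0 *v (A *v x)) \<bullet> (P0 *v (A *v x))" by (rule sym_dot[OF P0s])
    finally show ?thesis unfolding M_def by (simp add: qf_add qf_scale)
  qed
  have Ms: "transpose M = M" unfolding M_def using Qs P0s
    by (simp add: transpose_add transpose_scalar matrix_transpose_mul matrix_mul_assoc)
  have Mq0: "qf Q x \<le> qf M x" for x unfolding Mq using c20 q1 by simp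
  have Mp: "\<forall>x. x \<noteq> 0 \<longrightarrow> 0 < qf M x" using Qp Mq0 by (meson less_le_trans)
  have Mpsd: "pos_semidef M" unfolding pos_semidef_def using Ms pd_psd[OF Mp] by (simp add: qf_def)
  have Ax0: "A *v x \<noteq> 0" if "x \<noteq> 0" for x using that inv_vec(2)[OF Ainv, of x] by force
  have Gs: "transpose G = G" unfolding G_def using Ps by (simp add: matrix_transpose_mul matrix_mul_assoc)
  have Gq: "qf G x = qf P (A *v x)" for x unfolding G_def by (rule qf_congr)
  have Gp: "\<forall>x. x \<noteq> 0 \<longrightarrow> 0 < qf G x" using Gq Pp Ax0 by simp
  have lamb: "lam * qf P (A *v x) \<le> qf M x" for x
    unfolding lam_def using lam_bound[OF Mpsd Mp Gs Gp, of x] Gq by simp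
  have mem: "pos_def (Cmat A B Q R q qh)" if qh: "0 \<le> qh" "qh < q_crit A B Q R" "q - qh < max lam 0" for qh
  proof -
    define Ph where "Ph = Psol A B Q R qh"
    have sPh: "pos_def Ph \<and> mare A B Q R qh Ph" unfolding Ph_def by (rule psol[OF qh(1,2)])
    have Phs: "transpose Ph = Ph" and Php: "\<forall>x. x \<noteq> 0 \<longrightarrow> 0 < qf Ph x" using sPh by (auto simp: pos_def_qf)
    define Sh where "Sh = R + transpose B ** Ph ** B"
    have Shs: "transpose Sh = Sh" unfolding Sh_def by (rule sym_S[OF Rs Phs])
    have Shp: "\<forall>u. u \<noteq> 0 \<longrightarrow> 0 < qf Sh u" unfolding Sh_def by (rule S_pd[OF Rp]) (use pd_psd[OF Php] in blast)
    have Shinv: "invertible Sh" by (rule pd_invertible[OF Shp])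
    define Shi where "Shi = matrix_inv Sh"
    have Shis: "transpose Shi = Shi" unfolding Shi_def by (rule inv_sym[OF Shinv Shs])
    define K where "K = - (Shi ** transpose B ** Ph ** A)"
    define Ch where "Ch = transpose A ** Ph ** B ** Shi ** transpose B ** Ph ** A"
    have Ceq: "Cmat A B Q R q qh = Q + (1 - q) *\<^sub>R (transpose K ** R ** K) - (q - qh) *\<^sub>R Ch"
      unfolding Cmat_def Kgain_def Let_def K_def Ch_def Shi_def Sh_def Ph_def ..
    have Chs: "transpose Ch = Ch" unfolding Ch_def using Phs Shis
      by (simp add: matrix_transpose_mul matrix_mul_assoc)
    have KRs: "transpose (transpose K ** R ** K) = transpose K ** R ** K" using Rs
      by (simp add: matrix_transpose_mul matrix_mul_assoc)
    have Cs: "transpose (Cmat A B Q R q qh) = Cmat A B Q R q qh" unfolding Ceq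
      using Qs Chs KRs by (simp add: transpose_add transpose_diff transpose_scalar)
    have Cpos: "0 < qf (Cmat A B Q R q qh) x" if x0: "x \<noteq> 0" for x
    proof -
      define a where "a = A *v x"
      define w where "w = transpose B *v (Ph *v a)"
      define k where "k = Shi *v w"
      have a0: "a \<noteq> 0" unfolding a_def by (rule Ax0[OF x0])
      have Kx: "K *v x = - k" unfolding K_def k_def w_def a_def
        by (simp only: neg_mv matrix_vector_mul_assoc matrix_mul_assoc)
      have Skw: "Sh *v k = w" unfolding k_def Shi_def by (rule inv_vec(1)[OF Shinv])
      have wk: "w \<bullet> k = qf Sh k" unfolding qf_def using Skw sym_dot[OF Shs, of k k] by (simp add: inner_commute)
      have qKRK: "qf (transpose K ** R ** K) x = qf R k"
        using qf_congr[of K R x] Kx qf_scaleR_vec[of R "-1" k] by simp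
      have qCh: "qf Ch x = qf Sh k"
        unfolding Ch_def using qf_chain[OF Phs, of A B Shi x] wk unfolding k_def w_def a_def by simp
      define s where "s = qf Sh k"
      define rr where "rr = qf R k"
      define \<delta> where "\<delta> = q - qh"
      have Cq: "qf (Cmat A B Q R q qh) x = qf Q x + (1 - q) * rr - \<delta> * s"
        unfolding Ceq by (simp add: qf_add qf_diff qf_scale qKRK qCh rr_def s_def \<delta>_def)
      have s0: "0 \<le> s" unfolding s_def by (rule pd_psd[OF Shp])
      have rr0: "0 \<le> rr" unfolding rr_def by (rule pd_psd[OF Rp])
      have qQ: "0 < qf Q x" using Qp x0 by blast
      show ?thesis
      proof (rule ccontr)
        assume neg: "\<not> 0 < qf (Cmat A B Q R q qh) x"
        show False
        proof (cases "\<delta> \<le> 0")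
          case True
          have "0 \<le> (1 - q) * rr" using q1 rr0 by simp
          moreover have "\<delta> * s \<le> 0" using True s0 by (simp add: mult_nonpos_nonneg)
          ultimately show False using neg Cq qQ by linarith
        next
          case False
          hence d0: "0 < \<delta>" by simp
          have dl: "\<delta> < lam" using qh(3) d0 unfolding \<delta>_def by simp
          have qhq: "qh \<le> q" using d0 unfolding \<delta>_def by simp
          have F1: "s \<le> qf Ph a"
          proof -
            have c: "qf Ph (a + B *v (- k)) + qf R (- k) = qf Ph a - w \<bullet> (matrix_inv Sh *v w) + qf Sh (- k + matrix_inv Sh *v w)"
              using completion[OF Phs Rs Shinv[unfolded Sh_def], of a "- k"] unfolding Sh_def w_def by simp
            have "qf Sh (- k + matrix_inv Sh *v w) = 0" unfolding k_def Shi_def by (simp add: qf_def)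
            moreover have "w \<bullet> (matrix_inv Sh *v w) = s" unfolding s_def using wk unfolding k_def Shi_def .
            moreover have "0 \<le> qf Ph (a + B *v (- k))" by (rule pd_psd[OF Php])
            moreover have "0 \<le> qf R (- k)" by (rule pd_psd[OF Rp])
            ultimately show ?thesis using c by linarith
          qed
          have F2: "qf Ph a \<le> qf P a" unfolding Ph_def P_def
            by (rule mono_P[OF Qd Rd qh(1) qhq qc]) (use q1 in simp)
          have lmSh: "lambda_max Sh \<le> Lam"
          proof -
            obtain v where v: "norm v = 1" "qf Sh v = lambda_max Sh" using lmax(2)[OF Shs] by blast
            have "qf Sh v = qf R v + qf Ph (B *v v)" unfolding Sh_def by (simp add: qf_add qf_congr)
            also have "\<dots> \<le> qf R v + qf P (B *v v)" using F2 mono_P[OF Qd Rd qh(1) qhq qc, of "B *v v"] q1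
              unfolding Ph_def P_def by simp
            also have "\<dots> = qf SQ v" unfolding SQ_def by (simp add: qf_add qf_congr)
            also have "\<dots> \<le> Lam * (v \<bullet> v)" by (rule LamB)
            also have "v \<bullet> v = 1" using v(1) by (simp add: dot_square_norm)
            finally show ?thesis using v(2) by simp
          qed
          have sk: "s \<le> Lam * (k \<bullet> k)"
          proof -
            have "s \<le> lambda_max Sh * (k \<bullet> k)" unfolding s_def using lmax(1)[OF Shs] by blast
            also have "\<dots> \<le> Lam * (k \<bullet> k)" by (rule mult_right_mono[OF lmSh]) simp
            finally show ?thesis .
          qed
          have F5: "lamR * s \<le> Lam * rr"
          proof -
            have "lamR * s \<le> lamR * (Lam * (k \<bullet> k))" by (rule mult_left_mono[OF sk]) (use lamR0 in simp)
            also have "\<dots> = Lam * (lamR * (k \<bullet> k))" by simp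
            also have "\<dots> \<le> Lam * rr" unfolding rr_def by (rule mult_left_mono[OF lamRB]) (use Lam0 in simp)
            finally show ?thesis .
          qed
          have pa: "0 < qf P a" using Pp a0 by blast
          show False
          proof (rule real_core[of \<delta> lam "qf Q x" rr q s "qf P a" lamR Lam "c2 * ((P0 *v a) \<bullet> (P0 *v a))"])
            show "0 < \<delta>" by (rule d0)
            show "\<delta> < lam" by (rule dl)
            show "0 < qf Q x" by (rule qQ)
            show "0 \<le> rr" by (rule rr0)
            show "qf Q x + (1 - q) * rr \<le> \<delta> * s" using neg Cq by linarith
            show "0 \<le> 1 - q" using q1 by simp
            show "s \<le> qf P a" using F1 F2 by linarith
            show "0 < qf P a" by (rule pa)
            show "lamR * s \<le> Lam * rr" by (rule F5)
            show "0 < Lam" by (rule Lam0)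
            show "0 \<le> lamR" using lamR0 by simp
            show "c2 * ((P0 *v a) \<bullet> (P0 *v a)) \<le> lamR * qf P a / Lam" by (rule key3)
            show "lam * qf P a \<le> qf Q x + (1 - q) * (c2 * ((P0 *v a) \<bullet> (P0 *v a)))"
              using lamb[of x] Mq[of x] unfolding a_def by simp
          qed
        qed
      qed
    qed
    show ?thesis unfolding pos_def_qf using Cs Cpos by blast
  qed
  have inset: "ereal (max lam 0) \<in> {ereal d | d. 0 \<le> d \<and>
      (\<forall>qh. 0 \<le> qh \<and> qh < q_crit A B Q R \<and> q - qh < d \<longrightarrow> pos_def (Cmat A B Q R q qh))}"
  proof -
    have "0 \<le> max lam 0 \<and> (\<forall>qh. 0 \<le> qh \<and> qh < q_crit A B Q R \<and> q - qh < max lam 0 \<longrightarrow> pos_def (Cmat A B Q R q qh))"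
      using mem by auto
    thus ?thesis by blast
  qed
  have "ereal lam \<le> ereal (max lam 0)" by simp
  also have "\<dots> \<le> delta_bar A B Q R q" unfolding delta_bar_def by (rule Sup_upper[OF inset])
  finally show ?thesis unfolding lhs .
qed


end
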